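(* Let $F_c$ be a family and let $w$ be a weight function on $\bigcup F_c$ (i.e., $w(a) > 0$ for some $a \in \bigcup F_c$). If $\mathrm{fs}(F', w, \bigcup F_c) \ge 0$ for every $F' \in \mathrm{uce}(F_c)$, then $F_c$ is an FC-family.
   Context: All sets and families (sets of sets) are finite. A family $F$ is union closed if $A\cup B\in F$ for all $A,B\in F$; it is union closed for $F_c$ if it is union closed and $A \cup B \in F$ for all $A \in F$, $B \in F_c$. The union closed extensions of $F_c$ are $\mathrm{uce}(F_c) = \{F' : F' \subseteq \mathcal{P}(\bigcup F_c),\ F' \text{ union closed for } F_c\}$. A family $F$ is Frankl's if there is $a \in \bigcup F$ with $2\cdot|\{A\in F: a\in A\}| \ge |F|$; $F_c$ is an FC-family if every union-closed family $F\supseteq F_c$ is Frankl's. A weight function is a map $w$ from elements to $\mathbb{N}$; it is a weight function on $A$ if $w(a)>0$ for some $a\in A$. $\mathrm{sw}(w,A)=\sum_{a\in A} w(a)$. The share of a set $A$ w.r.t. $w$ and a set $X$ is the integer $\mathrm{ss}(A,w,X) = 2\,\mathrm{sw}(w,A) - \mathrm{sw}(w,X)$, and the share of a family is $\mathrm{fs}(F,w,X)=\sum_{A\in F}\mathrm{ss}(A,w,X)$. *)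

theory Defs
  imports Main
begin

definition finite_family :: "'a set set \<Rightarrow> bool" where
  "finite_family F \<longleftrightarrow> finite F \<and> (\<forall>A\<in>F. finite A)"

definition union_closed :: "'a set set \<Rightarrow> bool" where
  "union_closed F \<longleftrightarrow> (\<forall>A\<in>F. \<forall>B\<in>F. A \<union> B \<in> F)"

definition union_closed_for :: "'a set set \<Rightarrow> 'a set set \<Rightarrow> bool" where
  "union_closed_for F Fc \<longleftrightarrow> union_closed F \<and> (\<forall>A\<in>F. \<forall>B\<in>Fc. A \<union> B \<in> F)"

definition uce :: "'a set set \<Rightarrow> 'a set set set" where
  "uce Fc = {F'. F' \<subseteq> Pow (\<Union> Fc) \<and> union_closed_for F' Fc}"

definition frankls :: "'a set set \<Rightarrow> bool" where
  "frankls F \<longleftrightarrow> (\<exists>a\<in>\<Union> F. 2 * card {A\<in>F. a \<in> A} \<ge> card F)"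

definition FC_family :: "'a set set \<Rightarrow> bool" where
  "FC_family Fc \<longleftrightarrow>
     (\<forall>F. finite_family F \<longrightarrow> union_closed F \<longrightarrow> Fc \<subseteq> F \<longrightarrow> frankls F)"

definition weight_fun_on :: "('a \<Rightarrow> nat) \<Rightarrow> 'a set \<Rightarrow> bool" where
  "weight_fun_on w A \<longleftrightarrow> (\<exists>a\<in>A. w a > 0)"

definition sw :: "('a \<Rightarrow> nat) \<Rightarrow> 'a set \<Rightarrow> nat" where
  "sw w A = (\<Sum>a\<in>A. w a)"

definition ss :: "'a set \<Rightarrow> ('a \<Rightarrow> nat) \<Rightarrow> 'a set \<Rightarrow> int" where
  "ss A w X = 2 * int (sw w A) - int (sw w X)"

definition fs :: "'a set set \<Rightarrow> ('a \<Rightarrow> nat) \<Rightarrow> 'a set \<Rightarrow> int" where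
  "fs F w X = (\<Sum>A\<in>F. ss A w X)"

end

theory Submission
  imports Defs
begin

lemma double_count:
  fixes F :: "'a set set" and U :: "'a set" and w :: "'a \<Rightarrow> nat"
  assumes fF: "finite F" and fU: "finite U"
  shows "(\<Sum>A\<in>F. ss (A \<inter> U) w U) = (\<Sum>a\<in>U. int (w a) * (2 * int (card {A\<in>F. a \<in> A}) - int (card F)))"
proof -
  have e1: "int (sw w (A \<inter> U)) = (\<Sum>a\<in>U. if a \<in> A then int (w a) else 0)" for A
  proof -
    have "int (sw w (A \<inter> U)) = (\<Sum>a\<in>U \<inter> A. int (w a))"
      unfolding sw_def by (simp add: of_nat_sum Int_commute)
    also have "\<dots> = (\<Sum>a\<in>U. if a \<in> A then int (w a) else 0)"
      by (rule sum.inter_restrict[OF fU])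
    finally show ?thesis .
  qed
  have "(\<Sum>A\<in>F. ss (A \<inter> U) w U) = 2 * (\<Sum>A\<in>F. \<Sum>a\<in>U. if a \<in> A then int (w a) else 0) - int (card F) * int (sw w U)"
    unfolding ss_def by (simp add: e1 sum_subtractf sum_distrib_left)
  also have "(\<Sum>A\<in>F. \<Sum>a\<in>U. if a \<in> A then int (w a) else 0) = (\<Sum>a\<in>U. \<Sum>A\<in>F. if a \<in> A then int (w a) else 0)"
    by (rule sum.swap)
  also have "\<dots> = (\<Sum>a\<in>U. int (w a) * int (card {A\<in>F. a \<in> A}))"
    using fF by (intro sum.cong refl) (simp add: sum.If_cases Int_def mult.commute)
  finally show ?thesis
    unfolding sw_def by (simp add: algebra_simps sum_subtractf sum_distrib_left sum_distrib_right of_nat_sum)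
qed

theorem theorem1:
  fixes Fc :: "'a set set" and w :: "'a \<Rightarrow> nat"
  assumes "finite_family Fc"
    and "weight_fun_on w (\<Union> Fc)"
    and "\<forall>F'\<in>uce Fc. fs F' w (\<Union> Fc) \<ge> 0"
  shows "FC_family Fc"
  unfolding FC_family_def
proof (intro allI impI)
  fix F :: "'a set set"
  assume ff: "finite_family F" and uc: "union_closed F" and sub: "Fc \<subseteq> F"
  define U where "U = \<Union> Fc"
  have fU: "finite U" using assms(1) unfolding finite_family_def U_def by auto
  have fF: "finite F" using ff unfolding finite_family_def by auto
  obtain a0 where a0: "a0 \<in> U" "w a0 > 0" using assms(2) unfolding weight_fun_on_def U_def by auto
  define G where "G T = (\<lambda>A. A \<inter> U) ` {A\<in>F. A - U = T}" for T
  have GU: "G T \<in> uce Fc" for T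
    unfolding uce_def union_closed_for_def union_closed_def
  proof (intro CollectI conjI ballI)
    show "G T \<subseteq> Pow (\<Union> Fc)" unfolding G_def U_def by auto
  next
    fix X Y assume "X \<in> G T" "Y \<in> G T"
    then obtain A B where AB: "A \<in> F" "A - U = T" "X = A \<inter> U" "B \<in> F" "B - U = T" "Y = B \<inter> U"
      unfolding G_def by auto
    have "A \<union> B \<in> F" using uc AB unfolding union_closed_def by auto
    moreover have "(A \<union> B) - U = T" using AB by auto
    moreover have "X \<union> Y = (A \<union> B) \<inter> U" using AB by auto
    ultimately show "X \<union> Y \<in> G T" unfolding G_def by auto
  next
    fix X B assume "X \<in> G T" "B \<in> Fc"
    then obtain A where A: "A \<in> F" "A - U = T" "X = A \<inter> U"
      unfolding G_def by auto
    have "A \<union> B \<in> F" using uc A sub \<open>B \<in> Fc\<close> unfolding union_closed_def by auto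
    moreover have "B \<subseteq> U" using \<open>B \<in> Fc\<close> U_def by auto
    moreover have "(A \<union> B) - U = T" using A \<open>B \<subseteq> U\<close> by auto
    moreover have "X \<union> B = (A \<union> B) \<inter> U" using A \<open>B \<subseteq> U\<close> by auto
    ultimately show "X \<union> B \<in> G T" unfolding G_def by auto
  qed
  have fsG: "fs (G T) w U = (\<Sum>A\<in>{A\<in>F. A - U = T}. ss (A \<inter> U) w U)" for T
  proof -
    have "inj_on (\<lambda>A. A \<inter> U) {A\<in>F. A - U = T}"
    proof (rule inj_onI)
      fix A B assume "A \<in> {A\<in>F. A - U = T}" "B \<in> {A\<in>F. A - U = T}" "A \<inter> U = B \<inter> U"
      then have "A = (A \<inter> U) \<union> T" "B = (B \<inter> U) \<union> T" by auto
      then show "A = B" using \<open>A \<inter> U = B \<inter> U\<close> by simp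
    qed
    then show ?thesis unfolding fs_def G_def by (simp add: sum.reindex)
  qed
  have "(\<Sum>A\<in>F. ss (A \<inter> U) w U) = (\<Sum>T\<in>(\<lambda>A. A - U) ` F. \<Sum>A\<in>{A\<in>F. A - U = T}. ss (A \<inter> U) w U)"
    using fF by (rule sum.image_gen)
  also have "\<dots> = (\<Sum>T\<in>(\<lambda>A. A - U) ` F. fs (G T) w U)" by (simp add: fsG)
  also have "\<dots> \<ge> 0" using assms(3) GU U_def by (intro sum_nonneg) auto
  finally have nn: "(\<Sum>a\<in>U. int (w a) * (2 * int (card {A\<in>F. a \<in> A}) - int (card F))) \<ge> 0"
    using double_count[OF fF fU] by simp
  show "frankls F"
  proof (rule ccontr)
    assume nf: "\<not> frankls F"
    have UF: "U \<subseteq> \<Union> F" using sub U_def by auto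
    have neg: "2 * int (card {A\<in>F. a \<in> A}) - int (card F) < 0" if "a \<in> U" for a
      using nf that UF unfolding frankls_def by force
    have "(\<Sum>a\<in>U. int (w a) * (2 * int (card {A\<in>F. a \<in> A}) - int (card F)))
       = int (w a0) * (2 * int (card {A\<in>F. a0 \<in> A}) - int (card F))
         + (\<Sum>a\<in>U - {a0}. int (w a) * (2 * int (card {A\<in>F. a \<in> A}) - int (card F)))"
      using fU a0 by (simp add: sum.remove)
    also have "\<dots> < 0"
    proof -
      have "int (w a0) * (2 * int (card {A\<in>F. a0 \<in> A}) - int (card F)) < 0"
        using neg[OF a0(1)] a0(2) by (simp add: mult_pos_neg)
      moreover have "(\<Sum>a\<in>U - {a0}. int (w a) * (2 * int (card {A\<in>F. a \<in> A}) - int (card F))) \<le> 0"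
        using neg by (intro sum_nonpos) (simp add: mult_nonneg_nonpos less_imp_le)
      ultimately show ?thesis by simp
    qed
    finally show False using nn by simp
  qed
qed

end
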